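(* Let $G$ be a finite connected simple graph, $H$ a finite tree, and $\Delta$ a triangulation of $G\times H$. Then every Cartier divisor on $\Delta$ is linearly equivalent (i.e. differs by a principal divisor) to a Cartier divisor that vanishes on every diagonal edge of $\Delta$. The same holds with the roles of $G$ and $H$ exchanged.
   Context: Triangulated product: $\Delta$ has vertex set $V(G)\times V(H)$; horizontal edges $\{(a,b),(x,b)\}$ ($ax\in E(G)$, $b\in V(H)$); vertical edges $\{(a,b),(a,y)\}$ ($a\in V(G)$, $by\in E(H)$); for each $ax\in E(G)$, $by\in E(H)$ the square $(a,b),(x,b),(x,y),(a,y)$ is split by one chosen diagonal edge into two triangles. For a triangle $\sigma$, $\mathrm{diag}(\sigma)$ is its diagonal edge. $\alpha(e,v)=1$ if $v\in e$, $e$ diagonal; $\alpha(e,v)=|\{\text{triangles }\sigma\supset e: v\notin\mathrm{diag}(\sigma)\}|$ if $v\in e$, $e$ not diagonal; $0$ if $v\notin e$. For $\phi:V(\Delta)\to\mathbb{Z}$, $\operatorname{Div}(\phi)=\sum_{r}\big(\sum_{\sigma\supset r}\phi(\sigma\setminus r)-\sum_{u\in r}\alpha(r,u)\phi(u)\big)[r]$; principal divisors are those of this form. A divisor $D$ on $\Delta$ (formal $\mathbb{Z}$-combination of edges) is Cartier if for every vertex $v$ some $\phi$ satisfies $D(r)=\operatorname{Div}(\phi)(r)$ for all edges $r\ni v$. *)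

theory Defs
  imports Main
begin

definition simple_graph :: "'a set \<Rightarrow> 'a set set \<Rightarrow> bool" where
  "simple_graph V E \<longleftrightarrow> finite V \<and>
     (\<forall>e\<in>E. \<exists>a x. e = {a, x} \<and> a \<noteq> x \<and> a \<in> V \<and> x \<in> V)"

definition adj_rel :: "'a set set \<Rightarrow> ('a \<times> 'a) set" where
  "adj_rel E = {(a, x). {a, x} \<in> E}"

definition connected_graph :: "'a set \<Rightarrow> 'a set set \<Rightarrow> bool" where
  "connected_graph V E \<longleftrightarrow> V \<noteq> {} \<and> (\<forall>u\<in>V. \<forall>v\<in>V. (u, v) \<in> (adj_rel E)\<^sup>*)"

definition has_cycle :: "'a set \<Rightarrow> 'a set set \<Rightarrow> bool" where
  "has_cycle V E \<longleftrightarrow> (\<exists>vs. length vs \<ge> 3 \<and> distinct vs \<and> set vs \<subseteq> V \<and>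
      (\<forall>i. Suc i < length vs \<longrightarrow> {vs ! i, vs ! Suc i} \<in> E) \<and> {last vs, hd vs} \<in> E)"

definition tree_graph :: "'a set \<Rightarrow> 'a set set \<Rightarrow> bool" where
  "tree_graph V E \<longleftrightarrow> connected_graph V E \<and> \<not> has_cycle V E"

definition hor_edges :: "'a set set \<Rightarrow> 'b set \<Rightarrow> ('a \<times> 'b) set set" where
  "hor_edges EG VH = {{(a, b), (x, b)} | a x b. {a, x} \<in> EG \<and> b \<in> VH}"

definition ver_edges :: "'a set \<Rightarrow> 'b set set \<Rightarrow> ('a \<times> 'b) set set" where
  "ver_edges VG EH = {{(a, b), (a, y)} | a b y. a \<in> VG \<and> {b, y} \<in> EH}"

text \<open>A triangulation is given by its set Dg of chosen diagonals: for each square exactly one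
  of its two diagonals is chosen.\<close>
definition is_triangulation :: "'a set set \<Rightarrow> 'b set set \<Rightarrow> ('a \<times> 'b) set set \<Rightarrow> bool" where
  "is_triangulation EG EH Dg \<longleftrightarrow>
     Dg \<subseteq> {{(a, b), (x, y)} | a x b y. {a, x} \<in> EG \<and> {b, y} \<in> EH} \<and>
     (\<forall>a x b y. {a, x} \<in> EG \<longrightarrow> {b, y} \<in> EH \<longrightarrow>
        ({(a, b), (x, y)} \<in> Dg \<longleftrightarrow> {(x, b), (a, y)} \<notin> Dg))"

definition tri_vertices :: "'a set \<Rightarrow> 'b set \<Rightarrow> ('a \<times> 'b) set" where
  "tri_vertices VG VH = VG \<times> VH"

definition tri_edges ::
  "'a set \<Rightarrow> 'a set set \<Rightarrow> 'b set \<Rightarrow> 'b set set \<Rightarrow> ('a \<times> 'b) set set \<Rightarrow> ('a \<times> 'b) set set" where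
  "tri_edges VG EG VH EH Dg = hor_edges EG VH \<union> ver_edges VG EH \<union> Dg"

text \<open>The triangles: the square (a,b),(x,b),(x,y),(a,y) with diagonal {(a,b),(x,y)} is split
  into the two triangles obtained by adding (x,b) resp. (a,y) to the diagonal.\<close>
definition triangles ::
  "'a set set \<Rightarrow> 'b set set \<Rightarrow> ('a \<times> 'b) set set \<Rightarrow> ('a \<times> 'b) set set" where
  "triangles EG EH Dg = {insert c {(a, b), (x, y)} | a x b y c.
      {a, x} \<in> EG \<and> {b, y} \<in> EH \<and> {(a, b), (x, y)} \<in> Dg \<and> c \<in> {(x, b), (a, y)}}"

definition diag :: "('a \<times> 'b) set set \<Rightarrow> ('a \<times> 'b) set \<Rightarrow> ('a \<times> 'b) set" where
  "diag Dg \<sigma> = (THE e. e \<in> Dg \<and> e \<subseteq> \<sigma>)"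

definition alpha ::
  "'a set set \<Rightarrow> 'b set set \<Rightarrow> ('a \<times> 'b) set set \<Rightarrow> ('a \<times> 'b) set \<Rightarrow> 'a \<times> 'b \<Rightarrow> nat" where
  "alpha EG EH Dg e v =
     (if v \<notin> e then 0
      else if e \<in> Dg then 1
      else card {\<sigma> \<in> triangles EG EH Dg. e \<subseteq> \<sigma> \<and> v \<notin> diag Dg \<sigma>})"

definition is_divisor ::
  "'a set \<Rightarrow> 'a set set \<Rightarrow> 'b set \<Rightarrow> 'b set set \<Rightarrow> ('a \<times> 'b) set set \<Rightarrow> (('a \<times> 'b) set \<Rightarrow> int) \<Rightarrow> bool" where
  "is_divisor VG EG VH EH Dg D \<longleftrightarrow> (\<forall>r. r \<notin> tri_edges VG EG VH EH Dg \<longrightarrow> D r = 0)"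

definition Div ::
  "'a set \<Rightarrow> 'a set set \<Rightarrow> 'b set \<Rightarrow> 'b set set \<Rightarrow> ('a \<times> 'b) set set \<Rightarrow> ('a \<times> 'b \<Rightarrow> int)
     \<Rightarrow> ('a \<times> 'b) set \<Rightarrow> int" where
  "Div VG EG VH EH Dg \<phi> r =
     (if r \<in> tri_edges VG EG VH EH Dg then
        (\<Sum>\<sigma>\<in>{\<sigma> \<in> triangles EG EH Dg. r \<subseteq> \<sigma>}. \<phi> (the_elem (\<sigma> - r)))
        - (\<Sum>u\<in>r. int (alpha EG EH Dg r u) * \<phi> u)
      else 0)"

definition is_cartier ::
  "'a set \<Rightarrow> 'a set set \<Rightarrow> 'b set \<Rightarrow> 'b set set \<Rightarrow> ('a \<times> 'b) set set \<Rightarrow> (('a \<times> 'b) set \<Rightarrow> int) \<Rightarrow> bool" where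
  "is_cartier VG EG VH EH Dg D \<longleftrightarrow>
     is_divisor VG EG VH EH Dg D \<and>
     (\<forall>v\<in>tri_vertices VG VH. \<exists>\<phi>. \<forall>r\<in>tri_edges VG EG VH EH Dg. v \<in> r \<longrightarrow>
         D r = Div VG EG VH EH Dg \<phi> r)"

end

theory Submission
  imports Defs
begin


lemma sg_edge:
  assumes "simple_graph V E" "{a,x} \<in> E"
  shows "a \<noteq> x \<and> a \<in> V \<and> x \<in> V"
proof -
  obtain a' x' where "{a,x} = {a',x'}" "a' \<noteq> x'" "a' \<in> V" "x' \<in> V"
    using assms unfolding simple_graph_def by blast
  then show ?thesis by (metis doubleton_eq_iff)
qed

lemma leaf_exists:
  assumes sg: "simple_graph V E" and ne: "E \<noteq> {}" and nc: "\<not> has_cycle V E"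
  shows "\<exists>l p. {l,p} \<in> E \<and> (\<forall>y. {l,y} \<in> E \<longrightarrow> y = p)"
proof -
  define P where "P vs \<longleftrightarrow> distinct vs \<and> set vs \<subseteq> V \<and> length vs \<ge> 2 \<and>
      (\<forall>i. Suc i < length vs \<longrightarrow> {vs ! i, vs ! Suc i} \<in> E)" for vs
  have finV: "finite V" using sg unfolding simple_graph_def by blast
  obtain e where "e \<in> E" using ne by blast
  then obtain u w where "e = {u,w}" using sg unfolding simple_graph_def by meson
  then have uw: "{u,w} \<in> E" using \<open>e \<in> E\<close> by simp
  have "P [u,w]" unfolding P_def
  proof (intro conjI allI impI)
    fix i assume "Suc i < length [u,w]"
    then have "i = 0" by simp
    then show "{[u, w] ! i, [u, w] ! Suc i} \<in> E" using uw by simp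
  qed (use sg_edge[OF sg uw] in auto)
  then have ex0: "\<exists>vs. P vs \<and> length vs = 2" by auto
  have bnd: "\<forall>n. (\<exists>vs. P vs \<and> length vs = n) \<longrightarrow> n \<le> card V"
  proof (intro allI impI)
    fix m assume "\<exists>vs. P vs \<and> length vs = m"
    then obtain ws where "P ws" "length ws = m" by blast
    then have "card (set ws) = m" "set ws \<subseteq> V" unfolding P_def by (auto simp: distinct_card)
    then show "m \<le> card V" using card_mono[OF finV] by blast
  qed
  obtain n where n: "\<exists>vs. P vs \<and> length vs = n"
    and nmax: "\<forall>m. (\<exists>vs. P vs \<and> length vs = m) \<longrightarrow> m \<le> n"
    using Nat.ex_has_greatest_nat[of "\<lambda>n. \<exists>vs. P vs \<and> length vs = n", OF ex0 bnd] by blast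
  obtain vs where Pvs: "P vs" and len: "length vs = n" using n by blast
  have n2: "n \<ge> 2" using Pvs len unfolding P_def by auto
  define l where "l = vs ! (n - 1)"
  define p where "p = vs ! (n - 2)"
  have lastl: "last vs = l" using n2 len unfolding l_def by (metis last_conv_nth list.size(3) not_numeral_le_zero)
  have "Suc (n-2) < length vs" "Suc (n-2) = n - 1" using n2 len by auto
  then have "{p, l} \<in> E" using Pvs unfolding P_def p_def l_def by metis
  then have lp: "{l, p} \<in> E" by (simp add: insert_commute)
  have "\<forall>y. {l,y} \<in> E \<longrightarrow> y = p"
  proof (intro allI impI, rule ccontr)
    fix y assume ly: "{l,y} \<in> E" and yp: "y \<noteq> p"
    have yV: "y \<in> V" and lneqy: "l \<noteq> y" using sg_edge[OF sg ly] by auto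
    show False
    proof (cases "y \<in> set vs")
      case False
      have "P (vs @ [y])" unfolding P_def
      proof (intro conjI allI impI)
        show "distinct (vs @ [y])" using False Pvs unfolding P_def by auto
        show "set (vs @ [y]) \<subseteq> V" using yV Pvs unfolding P_def by auto
        show "2 \<le> length (vs @ [y])" using n2 len by auto
        fix i assume i: "Suc i < length (vs @ [y])"
        show "{(vs @ [y]) ! i, (vs @ [y]) ! Suc i} \<in> E"
        proof (cases "Suc i < n")
          case True then show ?thesis using Pvs len unfolding P_def by (simp add: nth_append)
        next
          case False then have "i = n - 1" using i len by auto
          then show ?thesis using ly len n2 unfolding l_def by (simp add: nth_append)
        qed
      qed
      then have "length (vs @ [y]) \<le> n" using nmax by blast
      then show False using len by simp
    next
      case True
      then obtain j where j: "j < n" "vs ! j = y" using len by (auto simp: in_set_conv_nth)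
      have "j \<noteq> n - 1" using j lneqy l_def by auto
      moreover have "j \<noteq> n - 2" using j yp p_def by auto
      ultimately have j3: "j + 3 \<le> n" using j n2 by linarith
      define ws where "ws = drop j vs"
      have "has_cycle V E" unfolding has_cycle_def
      proof (intro exI conjI allI impI)
        show "3 \<le> length ws" using j3 len ws_def by auto
        show "distinct ws" using Pvs ws_def unfolding P_def by auto
        show "set ws \<subseteq> V" using Pvs ws_def unfolding P_def by (meson order_trans set_drop_subset)
        fix i assume i: "Suc i < length ws"
        then have "Suc (j + i) < length vs" using ws_def by simp
        then have "{vs ! (j+i), vs ! Suc (j+i)} \<in> E" using Pvs unfolding P_def by blast
        moreover have "ws ! i = vs ! (j+i)" "ws ! Suc i = vs ! Suc (j+i)" using i ws_def j len by auto
        ultimately show "{ws ! i, ws ! Suc i} \<in> E" by simp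
      next
        have "last ws = l" using lastl j len ws_def by auto
        moreover have "hd ws = y" using j len ws_def by (simp add: hd_drop_conv_nth)
        ultimately show "{last ws, hd ws} \<in> E" using ly by simp
      qed
      then show False using nc by blast
    qed
  qed
  then show ?thesis using lp by blast
qed



lemma has_cycle_mono: "has_cycle V E' \<Longrightarrow> E' \<subseteq> E \<Longrightarrow> has_cycle V E"
  unfolding has_cycle_def by blast

lemma simple_graph_mono: "simple_graph V E \<Longrightarrow> E' \<subseteq> E \<Longrightarrow> simple_graph V E'"
  unfolding simple_graph_def by blast

lemma nbr_finite: "simple_graph V E \<Longrightarrow> finite {y. {b,y} \<in> E}"
proof -
  assume sg: "simple_graph V E"
  have "{y. {b,y} \<in> E} \<subseteq> V" using sg_edge[OF sg] by blast
  moreover have "finite V" using sg unfolding simple_graph_def by blast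
  ultimately show ?thesis using finite_subset by blast
qed

lemma AL:
  fixes EG :: "'a set set" and EH :: "'b set set" and c :: "'a \<Rightarrow> 'a \<Rightarrow> 'b \<Rightarrow> 'b \<Rightarrow> int"
    and T :: "'b \<Rightarrow> 'a \<Rightarrow> int"
  assumes "finite EH" "simple_graph VH EH" "\<not> has_cycle VH EH"
    "\<forall>a x b y. {a,x} \<in> EG \<longrightarrow> {b,y} \<in> EH \<longrightarrow> c a x y b = - c a x b y"
    "\<forall>b a x. {a,x} \<in> EG \<longrightarrow> T b x - T b a = (\<Sum>y\<in>{y. {b,y} \<in> EH}. c a x b y)"
  shows "\<exists>\<phi>. \<forall>a x b y. {a,x} \<in> EG \<longrightarrow> {b,y} \<in> EH \<longrightarrow>
            \<phi> (x,y) - \<phi> (x,b) - \<phi> (a,y) + \<phi> (a,b) = c a x b y"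
  using assms
proof (induction EH arbitrary: T rule: finite_psubset_induct)
  case (psubset EH)
  show ?case
  proof (cases "EH = {}")
    case True then show ?thesis by auto
  next
    case False
    obtain l p where lp: "{l,p} \<in> EH" and leaf: "\<forall>y. {l,y} \<in> EH \<longrightarrow> y = p"
      using leaf_exists[OF psubset.prems(1) False psubset.prems(2)] by blast
    have lnp: "l \<noteq> p" using sg_edge[OF psubset.prems(1) lp] by blast
    define EH' where "EH' = EH - {{l,p}}"
    have sub: "EH' \<subset> EH" using lp EH'_def by blast
    have sg': "simple_graph VH EH'" using simple_graph_mono[OF psubset.prems(1)] EH'_def by blast
    have nc': "\<not> has_cycle VH EH'" using has_cycle_mono psubset.prems(2) EH'_def by blast
    have anti': "\<forall>a x b y. {a,x} \<in> EG \<longrightarrow> {b,y} \<in> EH' \<longrightarrow> c a x y b = - c a x b y"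
      using psubset.prems(3) EH'_def by blast
    have Nl: "{y. {l,y} \<in> EH} = {p}" using leaf lp by blast
    have Nl': "{y. {l,y} \<in> EH'} = {}" using leaf EH'_def by blast
    have Np: "{y. {p,y} \<in> EH} = insert l {y. {p,y} \<in> EH'}"
      using lp EH'_def by (auto simp: insert_commute doubleton_eq_iff)
    have lnotin: "l \<notin> {y. {p,y} \<in> EH'}" using EH'_def by (auto simp: insert_commute)
    have No: "b \<noteq> l \<Longrightarrow> b \<noteq> p \<Longrightarrow> {y. {b,y} \<in> EH'} = {y. {b,y} \<in> EH}" for b
      using EH'_def by (auto simp: doubleton_eq_iff)
    have finp: "finite {y. {p,y} \<in> EH'}" using nbr_finite[OF sg'] .
    define T' where "T' b = (if b = p then (\<lambda>a. T p a + T l a) else if b = l then (\<lambda>a. 0) else T b)" for b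
    have hyp': "\<forall>b a x. {a,x} \<in> EG \<longrightarrow> T' b x - T' b a = (\<Sum>y\<in>{y. {b,y} \<in> EH'}. c a x b y)"
    proof (intro allI impI)
      fix b a x assume ax: "{a,x} \<in> EG"
      have hT: "T b' x - T b' a = (\<Sum>y\<in>{y. {b',y} \<in> EH}. c a x b' y)" for b'
        using psubset.prems(4) ax by blast
      show "T' b x - T' b a = (\<Sum>y\<in>{y. {b,y} \<in> EH'}. c a x b y)"
      proof (cases "b = p")
        case True
        have "T l x - T l a = c a x l p" using hT[of l] Nl by simp
        also have "\<dots> = - c a x p l" using psubset.prems(3) ax lp by (metis minus_minus)
        finally have e1: "T l x - T l a = - c a x p l" .
        have "T p x - T p a = c a x p l + (\<Sum>y\<in>{y. {p,y} \<in> EH'}. c a x p y)"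
          using hT[of p] Np finp lnotin by simp
        then show ?thesis using True e1 T'_def by simp
      next
        case False
        show ?thesis
        proof (cases "b = l")
          case True then show ?thesis using False T'_def Nl' by simp
        next
          case bl: False then show ?thesis using False T'_def No hT by simp
        qed
      qed
    qed
    obtain \<phi>' where \<phi>': "\<forall>a x b y. {a,x} \<in> EG \<longrightarrow> {b,y} \<in> EH' \<longrightarrow>
            \<phi>' (x,y) - \<phi>' (x,b) - \<phi>' (a,y) + \<phi>' (a,b) = c a x b y"
      using psubset.IH[OF sub sg' nc' anti' hyp'] by blast
    define \<phi> where "\<phi> v = (if snd v = l then \<phi>' (fst v, p) - T l (fst v) else \<phi>' v)" for v
    show ?thesis
    proof (intro exI allI impI)
      fix a x b y assume ax: "{a,x} \<in> EG" and by': "{b,y} \<in> EH"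
      have hTl: "T l x - T l a = c a x l p" using psubset.prems(4) ax Nl by simp
      have anl: "c a x p l = - c a x l p" using psubset.prems(3) ax lp by blast
      show "\<phi> (x,y) - \<phi> (x,b) - \<phi> (a,y) + \<phi> (a,b) = c a x b y"
      proof (cases "{b,y} = {l,p}")
        case True
        then have "(b = l \<and> y = p) \<or> (b = p \<and> y = l)" by (auto simp: doubleton_eq_iff)
        then show ?thesis
        proof
          assume "b = l \<and> y = p" then show ?thesis using hTl lnp \<phi>_def by simp
        next
          assume "b = p \<and> y = l" then show ?thesis using hTl anl lnp \<phi>_def by simp
        qed
      next
        case False
        then have in': "{b,y} \<in> EH'" using by' EH'_def by blast
        have "b \<noteq> l" using in' leaf EH'_def by blast
        moreover have "y \<noteq> l" using in' leaf EH'_def by (metis insert_commute Diff_iff singletonI)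
        ultimately show ?thesis using \<phi>' ax in' \<phi>_def by simp
      qed
    qed
  qed
qed



definition QH :: "'b set set \<Rightarrow> ('a \<times> 'b) set set \<Rightarrow> (('a \<times> 'b) set \<Rightarrow> int) \<Rightarrow> 'a \<Rightarrow> 'b \<Rightarrow> 'a \<Rightarrow> int" where
  "QH EH Dg D a b x = D {(a,b),(x,b)} + (\<Sum>y\<in>{y\<in>{y. {b,y} \<in> EH}. {(a,b),(x,y)} \<in> Dg}. D {(a,b),(x,y)})"

definition QV :: "'a set set \<Rightarrow> ('a \<times> 'b) set set \<Rightarrow> (('a \<times> 'b) set \<Rightarrow> int) \<Rightarrow> 'a \<Rightarrow> 'b \<Rightarrow> 'b \<Rightarrow> int" where
  "QV EG Dg D a b y = D {(a,b),(a,y)} + (\<Sum>x\<in>{x\<in>{x. {a,x} \<in> EG}. {(a,b),(x,y)} \<in> Dg}. D {(a,b),(x,y)})"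

lemma Div_add: "Div VG EG VH EH Dg (\<lambda>u. f u + g u) r = Div VG EG VH EH Dg f r + Div VG EG VH EH Dg g r"
  unfolding Div_def by (simp add: sum.distrib distrib_left)

context
  fixes VG :: "'a set" and EG :: "'a set set" and VH :: "'b set" and EH :: "'b set set"
    and Dg :: "('a \<times> 'b) set set"
  assumes sG: "simple_graph VG EG" and sH: "simple_graph VH EH" and tri: "is_triangulation EG EH Dg"
begin

lemma eG: "{a,x} \<in> EG \<Longrightarrow> a \<noteq> x \<and> a \<in> VG \<and> x \<in> VG" using sg_edge[OF sG] .
lemma eH: "{b,y} \<in> EH \<Longrightarrow> b \<noteq> y \<and> b \<in> VH \<and> y \<in> VH" using sg_edge[OF sH] .

lemma Dg_form: "e \<in> Dg \<Longrightarrow> \<exists>a x b y. e = {(a,b),(x,y)} \<and> {a,x} \<in> EG \<and> {b,y} \<in> EH"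
  using tri unfolding is_triangulation_def by blast

lemma xor: "{a,x} \<in> EG \<Longrightarrow> {b,y} \<in> EH \<Longrightarrow> ({(a,b),(x,y)} \<in> Dg \<longleftrightarrow> {(x,b),(a,y)} \<notin> Dg)"
  using tri unfolding is_triangulation_def by blast

lemma Dg_shape: "e \<in> Dg \<Longrightarrow> u \<in> e \<Longrightarrow> w \<in> e \<Longrightarrow> u \<noteq> w \<Longrightarrow> fst u \<noteq> fst w \<and> snd u \<noteq> snd w"
proof -
  assume "e \<in> Dg" "u \<in> e" "w \<in> e" "u \<noteq> w"
  then obtain a x b y where h: "e = {(a,b),(x,y)}" "{a,x} \<in> EG" "{b,y} \<in> EH" using Dg_form by blast
  then show ?thesis using eG[OF h(2)] eH[OF h(3)] \<open>u \<in> e\<close> \<open>w \<in> e\<close> \<open>u \<noteq> w\<close> by auto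
qed

lemma tri_mem: "\<sigma> \<in> triangles EG EH Dg \<longleftrightarrow> (\<exists>a x b y. {a,x} \<in> EG \<and> {b,y} \<in> EH \<and> {(a,b),(x,y)} \<in> Dg \<and>
   (\<sigma> = {(x,b),(a,b),(x,y)} \<or> \<sigma> = {(a,y),(a,b),(x,y)}))"
  unfolding triangles_def by blast

lemma dg_unique:
  assumes ax: "{a,x} \<in> EG" and "{b,y} \<in> EH" and c: "c \<in> {(x,b),(a,y)}"
   and e: "e \<in> Dg \<and> e \<subseteq> insert c {(a, b), (x, y)}"
  shows "e = {(a,b),(x,y)}"
proof -
  obtain a' x' b' y' where e': "e = {(a',b'),(x',y')}" "{a',x'} \<in> EG" "{b',y'} \<in> EH"
    using Dg_form[of e] e by blast
  have "a' \<noteq> x'" "b' \<noteq> y'" using eG[OF e'(2)] eH[OF e'(3)] by auto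
  moreover have "a \<noteq> x" "b \<noteq> y" using eG[OF ax] eH[OF assms(2)] by auto
  ultimately have ne: "a' \<noteq> x'" "b' \<noteq> y'" "a \<noteq> x" "b \<noteq> y" .
  have i1: "(a',b') \<in> insert c {(a,b),(x,y)}" "(x',y') \<in> insert c {(a,b),(x,y)}" using e e' by auto
  have n1: "(a',b') \<noteq> c"
  proof
    assume h: "(a',b') = c"
    then have "(x',y') \<noteq> c" using ne by auto
    then have "(x',y') = (a,b) \<or> (x',y') = (x,y)" using i1 by blast
    then show False using h c ne by auto
  qed
  have n2: "(x',y') \<noteq> c"
  proof
    assume h: "(x',y') = c"
    then have "(a',b') = (a,b) \<or> (a',b') = (x,y)" using i1 n1 by blast
    then show False using h c ne by auto
  qed
  have "(a',b') \<in> {(a,b),(x,y)}" "(x',y') \<in> {(a,b),(x,y)}" using i1 n1 n2 by auto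
  then show "e = {(a,b),(x,y)}" using e' ne by auto
qed

lemma diag_eq:
  assumes ax: "{a,x} \<in> EG" and "{b,y} \<in> EH" and d: "{(a,b),(x,y)} \<in> Dg" and c: "c \<in> {(x,b),(a,y)}"
  shows "diag Dg (insert c {(a,b),(x,y)}) = {(a,b),(x,y)}"
  unfolding diag_def
proof (rule the_equality)
  show "{(a,b),(x,y)} \<in> Dg \<and> {(a,b),(x,y)} \<subseteq> insert c {(a,b),(x,y)}" using d by blast
next
  fix e assume e: "e \<in> Dg \<and> e \<subseteq> insert c {(a, b), (x, y)}"
  show "e = {(a,b),(x,y)}" using dg_unique[OF ax assms(2) c e] .
qed

lemma Dg_tri_edges: "e \<in> Dg \<Longrightarrow> e \<in> tri_edges VG EG VH EH Dg"
  unfolding tri_edges_def by blast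

lemma tris_diag:
  assumes ax: "{a,x} \<in> EG" and by': "{b,y} \<in> EH" and d: "{(a,b),(x,y)} \<in> Dg"
  shows "{\<sigma> \<in> triangles EG EH Dg. {(a,b),(x,y)} \<subseteq> \<sigma>} = {insert (x,b) {(a,b),(x,y)}, insert (a,y) {(a,b),(x,y)}}"
proof (rule set_eqI, rule iffI)
  fix \<sigma> assume "\<sigma> \<in> {\<sigma> \<in> triangles EG EH Dg. {(a,b),(x,y)} \<subseteq> \<sigma>}"
  then have s: "\<sigma> \<in> triangles EG EH Dg" and sub: "{(a,b),(x,y)} \<subseteq> \<sigma>" by auto
  from s obtain a' x' b' y' c where h: "{a',x'} \<in> EG" "{b',y'} \<in> EH" "{(a',b'),(x',y')} \<in> Dg"
     "c \<in> {(x',b'),(a',y')}" "\<sigma> = insert c {(a',b'),(x',y')}"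
    unfolding triangles_def by blast
  have "{(a,b),(x,y)} \<in> Dg \<and> {(a,b),(x,y)} \<subseteq> insert c {(a',b'),(x',y')}" using d sub h(5) by simp
  from dg_unique[OF h(1) h(2) h(4) this] have eq: "{(a,b),(x,y)} = {(a',b'),(x',y')}" .
  then have "(a'=a \<and> b'=b \<and> x'=x \<and> y'=y) \<or> (a'=x \<and> b'=y \<and> x'=a \<and> y'=b)"
    by (auto simp: doubleton_eq_iff)
  then have cc: "c \<in> {(x,b),(a,y)}" using h(4) by auto
  have "\<sigma> = insert c {(a,b),(x,y)}" using h(5) eq by simp
  then show "\<sigma> \<in> {insert (x,b) {(a,b),(x,y)}, insert (a,y) {(a,b),(x,y)}}"
    using cc by auto
next
  fix \<sigma> assume "\<sigma> \<in> {insert (x,b) {(a,b),(x,y)}, insert (a,y) {(a,b),(x,y)}}"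
  then show "\<sigma> \<in> {\<sigma> \<in> triangles EG EH Dg. {(a,b),(x,y)} \<subseteq> \<sigma>}"
    using ax by' d unfolding triangles_def by blast
qed

lemma Div_diag:
  assumes ax: "{a,x} \<in> EG" and by': "{b,y} \<in> EH" and d: "{(a,b),(x,y)} \<in> Dg"
  shows "Div VG EG VH EH Dg \<phi> {(a,b),(x,y)} = \<phi> (x,b) + \<phi> (a,y) - \<phi> (a,b) - \<phi> (x,y)"
proof -
  have ne: "a \<noteq> x" "b \<noteq> y" using eG[OF ax] eH[OF by'] by auto
  have al: "alpha EG EH Dg {(a,b),(x,y)} u = 1" if "u \<in> {(a,b),(x,y)}" for u
    using that d unfolding alpha_def by simp
  have s2: "(\<Sum>u\<in>{(a,b),(x,y)}. int (alpha EG EH Dg {(a,b),(x,y)} u) * \<phi> u) = \<phi> (a,b) + \<phi> (x,y)"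
    using al ne by simp
  have dis: "insert (x,b) {(a,b),(x,y)} \<noteq> insert (a,y) {(a,b),(x,y)}" using ne by auto
  have "insert (x,b) {(a,b),(x,y)} - {(a,b),(x,y)} = {(x,b)}" using ne by auto
  then have t1: "the_elem (insert (x,b) {(a,b),(x,y)} - {(a,b),(x,y)}) = (x,b)" by simp
  have "insert (a,y) {(a,b),(x,y)} - {(a,b),(x,y)} = {(a,y)}" using ne by auto
  then have t2: "the_elem (insert (a,y) {(a,b),(x,y)} - {(a,b),(x,y)}) = (a,y)" by simp
  show ?thesis unfolding Div_def using Dg_tri_edges[OF d] tris_diag[OF ax by' d] s2 dis t1 t2
    by simp
qed

lemma tri_mem2: "\<sigma> \<in> triangles EG EH Dg \<longleftrightarrow> (\<exists>a x b y. {a,x} \<in> EG \<and> {b,y} \<in> EH \<and> {(a,b),(x,y)} \<in> Dg \<and>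
   \<sigma> = {(x,b),(a,b),(x,y)})"
proof
  assume "\<sigma> \<in> triangles EG EH Dg"
  then have "\<exists>a x b y. {a,x} \<in> EG \<and> {b,y} \<in> EH \<and> {(a,b),(x,y)} \<in> Dg \<and>
   (\<sigma> = {(x,b),(a,b),(x,y)} \<or> \<sigma> = {(a,y),(a,b),(x,y)})" unfolding tri_mem .
  then obtain a x b y where h: "{a,x} \<in> EG" "{b,y} \<in> EH" "{(a,b),(x,y)} \<in> Dg"
     "\<sigma> = {(x,b),(a,b),(x,y)} \<or> \<sigma> = {(a,y),(a,b),(x,y)}" by blast
  from h(4) show "\<exists>a x b y. {a,x} \<in> EG \<and> {b,y} \<in> EH \<and> {(a,b),(x,y)} \<in> Dg \<and> \<sigma> = {(x,b),(a,b),(x,y)}"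
  proof
    assume "\<sigma> = {(x,b),(a,b),(x,y)}" then show ?thesis using h by blast
  next
    assume s: "\<sigma> = {(a,y),(a,b),(x,y)}"
    have "{x,a} \<in> EG" "{y,b} \<in> EH" "{(x,y),(a,b)} \<in> Dg" using h by (auto simp: insert_commute)
    moreover have "\<sigma> = {(a,y),(x,y),(a,b)}" using s by (auto simp: insert_commute)
    ultimately show ?thesis by blast
  qed
next
  assume "\<exists>a x b y. {a,x} \<in> EG \<and> {b,y} \<in> EH \<and> {(a,b),(x,y)} \<in> Dg \<and> \<sigma> = {(x,b),(a,b),(x,y)}"
  then show "\<sigma> \<in> triangles EG EH Dg" unfolding tri_mem by blast
qed

lemma sum_if_card:
  assumes "finite N"
  shows "(\<Sum>y\<in>N. if P y then (A::int) else B) = int (card {y\<in>N. P y}) * A + int (card {y\<in>N. \<not> P y}) * B"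
proof -
  have "(\<Sum>y\<in>N. if P y then A else B) = (\<Sum>y\<in>N \<inter> {y. P y}. A) + (\<Sum>y\<in>N \<inter> - {y. P y}. B)"
    by (rule sum.If_cases[OF assms])
  moreover have "N \<inter> {y. P y} = {y\<in>N. P y}" "N \<inter> - {y. P y} = {y\<in>N. \<not> P y}" by auto
  ultimately show ?thesis by simp
qed

lemma Div_hor:
  assumes ax: "{a,x} \<in> EG" and bV: "b \<in> VH"
  shows "Div VG EG VH EH Dg \<phi> {(a,b),(x,b)} =
    (\<Sum>y\<in>{y. {b,y} \<in> EH}. if {(a,b),(x,y)} \<in> Dg then \<phi> (x,y) - \<phi> (x,b) else \<phi> (a,y) - \<phi> (a,b))"
proof -
  define N where "N = {y. {b,y} \<in> EH}"
  define h where "h = {(a,b),(x,b)}"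
  define P where "P y \<longleftrightarrow> {(a,b),(x,y)} \<in> Dg" for y
  define sf where "sf y = (if P y then insert (x,b) {(a,b),(x,y)} else insert (a,b) {(x,b),(a,y)})" for y
  have finN: "finite N" unfolding N_def using nbr_finite[OF sH] .
  have anx: "a \<noteq> x" and aV: "a \<in> VG" and xV: "x \<in> VG" using eG[OF ax] by auto
  have yb: "y \<noteq> b" if "y \<in> N" for y
  proof -
    have "{b,y} \<in> EH" using that N_def by simp
    from eH[OF this] show ?thesis by auto
  qed
  have hE: "h \<in> tri_edges VG EG VH EH Dg" unfolding tri_edges_def hor_edges_def h_def using ax bV by blast
  have hD: "h \<notin> Dg"
  proof
    assume "h \<in> Dg"
    then have "snd (a,b) \<noteq> snd (x,b)" using Dg_shape[of h "(a,b)" "(x,b)"] anx h_def by auto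
    then show False by simp
  qed
  have xa: "{x,a} \<in> EG" using ax by (simp add: insert_commute)
  have S: "{\<sigma> \<in> triangles EG EH Dg. h \<subseteq> \<sigma>} = sf ` N"
  proof (rule set_eqI, rule iffI)
    fix \<sigma> assume "\<sigma> \<in> {\<sigma> \<in> triangles EG EH Dg. h \<subseteq> \<sigma>}"
    then have s: "\<sigma> \<in> triangles EG EH Dg" and sub: "h \<subseteq> \<sigma>" by auto
    from s obtain a' x' b' y' where t: "{a',x'} \<in> EG" "{b',y'} \<in> EH" "{(a',b'),(x',y')} \<in> Dg"
        "\<sigma> = {(x',b'),(a',b'),(x',y')}" unfolding tri_mem2 by blast
    have ne': "a' \<noteq> x'" "b' \<noteq> y'" using eG[OF t(1)] eH[OF t(2)] by auto
    have m1: "(a,b) \<in> \<sigma>" "(x,b) \<in> \<sigma>" using sub h_def by auto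
    have c1: "(a,b) = (x',b') \<or> (a,b) = (a',b') \<or> (a,b) = (x',y')" using m1 t(4) by simp
    have c2: "(x,b) = (x',b') \<or> (x,b) = (a',b') \<or> (x,b) = (x',y')" using m1 t(4) by simp
    have bb: "b' = b" and axs: "(a = a' \<and> x = x') \<or> (a = x' \<and> x = a')"
      using c1 c2 ne' anx by auto
    have yN: "y' \<in> N" using t(2) bb N_def by simp
    from axs show "\<sigma> \<in> sf ` N"
    proof
      assume "a = a' \<and> x = x'"
      then have "P y'" "\<sigma> = sf y'" using t bb P_def sf_def by auto
      then show ?thesis using yN by blast
    next
      assume aa: "a = x' \<and> x = a'"
      then have "{(x,b),(a,y')} \<in> Dg" using t(3) bb by simp
      then have "\<not> P y'" using xor[OF ax, of b y'] t(2) bb P_def by simp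
      then have "\<sigma> = sf y'" using t aa bb sf_def by (auto simp: insert_commute)
      then show ?thesis using yN by blast
    qed
  next
    fix \<sigma> assume "\<sigma> \<in> sf ` N"
    then obtain y where yN: "y \<in> N" and s: "\<sigma> = sf y" by blast
    have by': "{b,y} \<in> EH" using yN N_def by simp
    show "\<sigma> \<in> {\<sigma> \<in> triangles EG EH Dg. h \<subseteq> \<sigma>}"
    proof (cases "P y")
      case True
      then have "\<sigma> = {(x,b),(a,b),(x,y)}" using s sf_def by simp
      then show ?thesis using ax by' True unfolding P_def tri_mem2 h_def by blast
    next
      case False
      then have d: "{(x,b),(a,y)} \<in> Dg" using xor[OF ax by'] P_def by simp
      have "\<sigma> = {(a,b),(x,b),(a,y)}" using s sf_def False by simp
      then show ?thesis using xa by' d unfolding tri_mem2 h_def by blast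
    qed
  qed
  have sndsf: "snd ` sf y = {b,y}" for y unfolding sf_def by auto
  have inj: "inj_on sf N"
  proof
    fix y1 y2 assume "y1 \<in> N" "y2 \<in> N" "sf y1 = sf y2"
    then have "{b,y1} = {b,y2}" "y1 \<noteq> b" "y2 \<noteq> b" using sndsf yb by metis+
    then show "y1 = y2" by (metis doubleton_eq_iff)
  qed
  have te: "the_elem (sf y - h) = (if P y then (x,y) else (a,y))" if "y \<in> N" for y
  proof -
    have "sf y - h = {if P y then (x,y) else (a,y)}" using yb[OF that] anx sf_def h_def by auto
    then show ?thesis by simp
  qed
  have dg: "diag Dg (sf y) = (if P y then {(a,b),(x,y)} else {(x,b),(a,y)})" if "y \<in> N" for y
  proof -
    have by': "{b,y} \<in> EH" using that N_def by simp
    show ?thesis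
    proof (cases "P y")
      case True then show ?thesis using diag_eq[OF ax by', of "(x,b)"] P_def sf_def by simp
    next
      case False
      then have d: "{(x,b),(a,y)} \<in> Dg" using xor[OF ax by'] P_def by simp
      show ?thesis using False diag_eq[OF xa by' d, of "(a,b)"] sf_def by simp
    qed
  qed
  have A1: "{\<sigma> \<in> triangles EG EH Dg. h \<subseteq> \<sigma> \<and> (a,b) \<notin> diag Dg \<sigma>} = sf ` {y\<in>N. \<not> P y}"
  proof -
    have "{\<sigma> \<in> triangles EG EH Dg. h \<subseteq> \<sigma> \<and> (a,b) \<notin> diag Dg \<sigma>} = {\<sigma> \<in> sf ` N. (a,b) \<notin> diag Dg \<sigma>}"
      using S by blast
    also have "\<dots> = sf ` {y\<in>N. \<not> P y}"
    proof -
      have "(a,b) \<notin> diag Dg (sf y) \<longleftrightarrow> \<not> P y" if "y \<in> N" for y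
        using dg[OF that] anx yb[OF that] by auto
      then show ?thesis by auto
    qed
    finally show ?thesis .
  qed
  have A2: "{\<sigma> \<in> triangles EG EH Dg. h \<subseteq> \<sigma> \<and> (x,b) \<notin> diag Dg \<sigma>} = sf ` {y\<in>N. P y}"
  proof -
    have "{\<sigma> \<in> triangles EG EH Dg. h \<subseteq> \<sigma> \<and> (x,b) \<notin> diag Dg \<sigma>} = {\<sigma> \<in> sf ` N. (x,b) \<notin> diag Dg \<sigma>}"
      using S by blast
    also have "\<dots> = sf ` {y\<in>N. P y}"
    proof -
      have "(x,b) \<notin> diag Dg (sf y) \<longleftrightarrow> P y" if "y \<in> N" for y
        using dg[OF that] anx yb[OF that] by auto
      then show ?thesis by auto
    qed
    finally show ?thesis .
  qed
  have al1: "alpha EG EH Dg h (a,b) = card {y\<in>N. \<not> P y}"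
    unfolding alpha_def using hD h_def A1 card_image[OF inj_on_subset[OF inj, of "{y\<in>N. \<not> P y}"]] by auto
  have al2: "alpha EG EH Dg h (x,b) = card {y\<in>N. P y}"
    unfolding alpha_def using hD h_def A2 card_image[OF inj_on_subset[OF inj, of "{y\<in>N. P y}"]] by auto
  have sum1: "(\<Sum>\<sigma>\<in>{\<sigma> \<in> triangles EG EH Dg. h \<subseteq> \<sigma>}. \<phi> (the_elem (\<sigma> - h))) =
      (\<Sum>y\<in>N. if P y then \<phi> (x,y) else \<phi> (a,y))"
    unfolding S using sum.reindex[OF inj, of "\<lambda>\<sigma>. \<phi> (the_elem (\<sigma> - h))"] te
    by (simp add: if_distrib)
  have sum2: "(\<Sum>u\<in>h. int (alpha EG EH Dg h u) * \<phi> u) =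
      int (card {y\<in>N. \<not> P y}) * \<phi> (a,b) + int (card {y\<in>N. P y}) * \<phi> (x,b)"
    using al1 al2 anx h_def by simp
  have "Div VG EG VH EH Dg \<phi> h = (\<Sum>y\<in>N. if P y then \<phi> (x,y) else \<phi> (a,y))
      - (int (card {y\<in>N. \<not> P y}) * \<phi> (a,b) + int (card {y\<in>N. P y}) * \<phi> (x,b))"
    unfolding Div_def using hE sum1 sum2 by simp
  also have "\<dots> = (\<Sum>y\<in>N. if P y then \<phi> (x,y) - \<phi> (x,b) else \<phi> (a,y) - \<phi> (a,b))"
  proof -
    have "(\<Sum>y\<in>N. if P y then \<phi> (x,y) - \<phi> (x,b) else \<phi> (a,y) - \<phi> (a,b)) =
       (\<Sum>y\<in>N. (if P y then \<phi> (x,y) else \<phi> (a,y)) - (if P y then \<phi> (x,b) else \<phi> (a,b)))"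
      by (rule sum.cong) auto
    also have "\<dots> = (\<Sum>y\<in>N. if P y then \<phi> (x,y) else \<phi> (a,y)) - (\<Sum>y\<in>N. if P y then \<phi> (x,b) else \<phi> (a,b))"
      by (rule sum_subtractf)
    also have "(\<Sum>y\<in>N. if P y then \<phi> (x,b) else \<phi> (a,b)) = int (card {y\<in>N. P y}) * \<phi> (x,b) + int (card {y\<in>N. \<not> P y}) * \<phi> (a,b)"
      by (rule sum_if_card[OF finN])
    finally show ?thesis by simp
  qed
  finally show ?thesis unfolding h_def N_def P_def .
qed

lemma Div_ver:
  assumes aV: "a \<in> VG" and by': "{b,y} \<in> EH"
  shows "Div VG EG VH EH Dg \<phi> {(a,b),(a,y)} =
    (\<Sum>x\<in>{x. {a,x} \<in> EG}. if {(a,b),(x,y)} \<in> Dg then \<phi> (x,y) - \<phi> (a,y) else \<phi> (x,b) - \<phi> (a,b))"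
proof -
  define N where "N = {x. {a,x} \<in> EG}"
  define h where "h = {(a,b),(a,y)}"
  define P where "P x \<longleftrightarrow> {(a,b),(x,y)} \<in> Dg" for x
  define sf where "sf x = (if P x then insert (a,y) {(a,b),(x,y)} else insert (a,b) {(x,b),(a,y)})" for x
  have finN: "finite N" unfolding N_def using nbr_finite[OF sG] .
  have bny: "b \<noteq> y" using eH[OF by'] by auto
  have xa': "x \<noteq> a" if "x \<in> N" for x
  proof -
    have "{a,x} \<in> EG" using that N_def by simp
    from eG[OF this] show ?thesis by auto
  qed
  have yb': "{y,b} \<in> EH" using by' by (simp add: insert_commute)
  have hE: "h \<in> tri_edges VG EG VH EH Dg" unfolding tri_edges_def ver_edges_def h_def using aV by' by blast
  have hD: "h \<notin> Dg"
  proof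
    assume "h \<in> Dg"
    then have "fst (a,b) \<noteq> fst (a,y)" using Dg_shape[of h "(a,b)" "(a,y)"] bny h_def by auto
    then show False by simp
  qed
  have S: "{\<sigma> \<in> triangles EG EH Dg. h \<subseteq> \<sigma>} = sf ` N"
  proof (rule set_eqI, rule iffI)
    fix \<sigma> assume "\<sigma> \<in> {\<sigma> \<in> triangles EG EH Dg. h \<subseteq> \<sigma>}"
    then have s: "\<sigma> \<in> triangles EG EH Dg" and sub: "h \<subseteq> \<sigma>" by auto
    from s obtain a' x' b' y' where t: "{a',x'} \<in> EG" "{b',y'} \<in> EH" "{(a',b'),(x',y')} \<in> Dg"
        "\<sigma> = {(x',b'),(a',b'),(x',y')}" unfolding tri_mem2 by blast
    have ne': "a' \<noteq> x'" "b' \<noteq> y'" using eG[OF t(1)] eH[OF t(2)] by auto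
    have m1: "(a,b) \<in> \<sigma>" "(a,y) \<in> \<sigma>" using sub h_def by auto
    have c1: "(a,b) = (x',b') \<or> (a,b) = (a',b') \<or> (a,b) = (x',y')" using m1 t(4) by simp
    have c2: "(a,y) = (x',b') \<or> (a,y) = (a',b') \<or> (a,y) = (x',y')" using m1 t(4) by simp
    have aa: "x' = a" and bys: "(b = b' \<and> y = y') \<or> (b = y' \<and> y = b')"
      using c1 c2 ne' bny by auto
    have axN: "{a,a'} \<in> EG" using t(1) aa by (simp add: insert_commute)
    then have xN: "a' \<in> N" using N_def by simp
    from bys show "\<sigma> \<in> sf ` N"
    proof
      assume bb: "b = b' \<and> y = y'"
      then have "{(a',b),(a,y)} \<in> Dg" using t(3) aa by simp
      then have "\<not> P a'" using xor[OF axN by'] P_def by simp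
      then have "\<sigma> = sf a'" using t aa bb sf_def by (auto simp: insert_commute)
      then show ?thesis using xN by blast
    next
      assume bb: "b = y' \<and> y = b'"
      then have "{(a',y),(a,b)} \<in> Dg" using t(3) aa by simp
      then have "P a'" using P_def by (simp add: insert_commute)
      then have "\<sigma> = sf a'" using t aa bb sf_def by (auto simp: insert_commute)
      then show ?thesis using xN by blast
    qed
  next
    fix \<sigma> assume "\<sigma> \<in> sf ` N"
    then obtain x where xN: "x \<in> N" and s: "\<sigma> = sf x" by blast
    have ax: "{a,x} \<in> EG" using xN N_def by simp
    have xa: "{x,a} \<in> EG" using ax by (simp add: insert_commute)
    show "\<sigma> \<in> {\<sigma> \<in> triangles EG EH Dg. h \<subseteq> \<sigma>}"
    proof (cases "P x")
      case True
      then have d: "{(x,y),(a,b)} \<in> Dg" using P_def by (simp add: insert_commute)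
      have "\<sigma> = {(a,y),(x,y),(a,b)}" using s sf_def True by auto
      then show ?thesis using xa yb' d unfolding tri_mem2 h_def by blast
    next
      case False
      then have d: "{(x,b),(a,y)} \<in> Dg" using xor[OF ax by'] P_def by simp
      have "\<sigma> = {(a,b),(x,b),(a,y)}" using s sf_def False by auto
      then show ?thesis using xa by' d unfolding tri_mem2 h_def by blast
    qed
  qed
  have fstsf: "fst ` sf x = {a,x}" for x unfolding sf_def by auto
  have inj: "inj_on sf N"
  proof
    fix y1 y2 assume "y1 \<in> N" "y2 \<in> N" "sf y1 = sf y2"
    then have "{a,y1} = {a,y2}" "y1 \<noteq> a" "y2 \<noteq> a" using fstsf xa' by metis+
    then show "y1 = y2" by (metis doubleton_eq_iff)
  qed
  have te: "the_elem (sf x - h) = (if P x then (x,y) else (x,b))" if "x \<in> N" for x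
  proof -
    have "sf x - h = {if P x then (x,y) else (x,b)}" using xa'[OF that] bny sf_def h_def by auto
    then show ?thesis by simp
  qed
  have dg: "diag Dg (sf x) = (if P x then {(a,b),(x,y)} else {(x,b),(a,y)})" if "x \<in> N" for x
  proof -
    have ax: "{a,x} \<in> EG" using that N_def by simp
    have xa: "{x,a} \<in> EG" using ax by (simp add: insert_commute)
    show ?thesis
    proof (cases "P x")
      case True then show ?thesis using diag_eq[OF ax by', of "(a,y)"] P_def sf_def by simp
    next
      case False
      then have d: "{(x,b),(a,y)} \<in> Dg" using xor[OF ax by'] P_def by simp
      show ?thesis using False diag_eq[OF xa by' d, of "(a,b)"] sf_def by simp
    qed
  qed
  have A1: "{\<sigma> \<in> triangles EG EH Dg. h \<subseteq> \<sigma> \<and> (a,b) \<notin> diag Dg \<sigma>} = sf ` {x\<in>N. \<not> P x}"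
  proof -
    have "{\<sigma> \<in> triangles EG EH Dg. h \<subseteq> \<sigma> \<and> (a,b) \<notin> diag Dg \<sigma>} = {\<sigma> \<in> sf ` N. (a,b) \<notin> diag Dg \<sigma>}"
      using S by blast
    also have "\<dots> = sf ` {x\<in>N. \<not> P x}"
    proof -
      have "(a,b) \<notin> diag Dg (sf x) \<longleftrightarrow> \<not> P x" if "x \<in> N" for x
        using dg[OF that] bny xa'[OF that] by auto
      then show ?thesis by auto
    qed
    finally show ?thesis .
  qed
  have A2: "{\<sigma> \<in> triangles EG EH Dg. h \<subseteq> \<sigma> \<and> (a,y) \<notin> diag Dg \<sigma>} = sf ` {x\<in>N. P x}"
  proof -
    have "{\<sigma> \<in> triangles EG EH Dg. h \<subseteq> \<sigma> \<and> (a,y) \<notin> diag Dg \<sigma>} = {\<sigma> \<in> sf ` N. (a,y) \<notin> diag Dg \<sigma>}"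
      using S by blast
    also have "\<dots> = sf ` {x\<in>N. P x}"
    proof -
      have "(a,y) \<notin> diag Dg (sf x) \<longleftrightarrow> P x" if "x \<in> N" for x
        using dg[OF that] bny xa'[OF that] by auto
      then show ?thesis by auto
    qed
    finally show ?thesis .
  qed
  have al1: "alpha EG EH Dg h (a,b) = card {x\<in>N. \<not> P x}"
    unfolding alpha_def using hD h_def A1 card_image[OF inj_on_subset[OF inj, of "{x\<in>N. \<not> P x}"]] by auto
  have al2: "alpha EG EH Dg h (a,y) = card {x\<in>N. P x}"
    unfolding alpha_def using hD h_def A2 card_image[OF inj_on_subset[OF inj, of "{x\<in>N. P x}"]] by auto
  have sum1: "(\<Sum>\<sigma>\<in>{\<sigma> \<in> triangles EG EH Dg. h \<subseteq> \<sigma>}. \<phi> (the_elem (\<sigma> - h))) =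
      (\<Sum>x\<in>N. if P x then \<phi> (x,y) else \<phi> (x,b))"
    unfolding S using sum.reindex[OF inj, of "\<lambda>\<sigma>. \<phi> (the_elem (\<sigma> - h))"] te
    by (simp add: if_distrib)
  have sum2: "(\<Sum>u\<in>h. int (alpha EG EH Dg h u) * \<phi> u) =
      int (card {x\<in>N. \<not> P x}) * \<phi> (a,b) + int (card {x\<in>N. P x}) * \<phi> (a,y)"
    using al1 al2 bny h_def by simp
  have "Div VG EG VH EH Dg \<phi> h = (\<Sum>x\<in>N. if P x then \<phi> (x,y) else \<phi> (x,b))
      - (int (card {x\<in>N. \<not> P x}) * \<phi> (a,b) + int (card {x\<in>N. P x}) * \<phi> (a,y))"
    unfolding Div_def using hE sum1 sum2 by simp
  also have "\<dots> = (\<Sum>x\<in>N. if P x then \<phi> (x,y) - \<phi> (a,y) else \<phi> (x,b) - \<phi> (a,b))"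
  proof -
    have "(\<Sum>x\<in>N. if P x then \<phi> (x,y) - \<phi> (a,y) else \<phi> (x,b) - \<phi> (a,b)) =
       (\<Sum>x\<in>N. (if P x then \<phi> (x,y) else \<phi> (x,b)) - (if P x then \<phi> (a,y) else \<phi> (a,b)))"
      by (rule sum.cong) auto
    also have "\<dots> = (\<Sum>x\<in>N. if P x then \<phi> (x,y) else \<phi> (x,b)) - (\<Sum>x\<in>N. if P x then \<phi> (a,y) else \<phi> (a,b))"
      by (rule sum_subtractf)
    also have "(\<Sum>x\<in>N. if P x then \<phi> (a,y) else \<phi> (a,b)) = int (card {x\<in>N. P x}) * \<phi> (a,y) + int (card {x\<in>N. \<not> P x}) * \<phi> (a,b)"
      by (rule sum_if_card[OF finN])
    finally show ?thesis by simp
  qed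
  finally show ?thesis unfolding h_def N_def P_def .
qed

lemma QH_Div:
  assumes ax: "{a,x} \<in> EG" and bV: "b \<in> VH"
  shows "Div VG EG VH EH Dg \<phi> {(a,b),(x,b)} + (\<Sum>y\<in>{y\<in>{y. {b,y} \<in> EH}. {(a,b),(x,y)} \<in> Dg}. Div VG EG VH EH Dg \<phi> {(a,b),(x,y)})
     = (\<Sum>y\<in>{y. {b,y} \<in> EH}. \<phi> (a,y) - \<phi> (a,b))"
proof -
  define N where "N = {y. {b,y} \<in> EH}"
  have finN: "finite N" unfolding N_def using nbr_finite[OF sH] .
  have "(\<Sum>y\<in>{y\<in>N. {(a,b),(x,y)} \<in> Dg}. Div VG EG VH EH Dg \<phi> {(a,b),(x,y)})
     = (\<Sum>y\<in>N. if {(a,b),(x,y)} \<in> Dg then Div VG EG VH EH Dg \<phi> {(a,b),(x,y)} else 0)"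
    by (rule sum.inter_filter[OF finN])
  also have "\<dots> = (\<Sum>y\<in>N. if {(a,b),(x,y)} \<in> Dg then \<phi> (x,b) + \<phi> (a,y) - \<phi> (a,b) - \<phi> (x,y) else 0)"
  proof (rule sum.cong[OF refl])
    fix y assume "y \<in> N"
    then have by': "{b,y} \<in> EH" using N_def by simp
    show "(if {(a,b),(x,y)} \<in> Dg then Div VG EG VH EH Dg \<phi> {(a,b),(x,y)} else 0) =
          (if {(a,b),(x,y)} \<in> Dg then \<phi> (x,b) + \<phi> (a,y) - \<phi> (a,b) - \<phi> (x,y) else 0)"
      using Div_diag[OF ax by'] by simp
  qed
  finally have e1: "(\<Sum>y\<in>{y\<in>N. {(a,b),(x,y)} \<in> Dg}. Div VG EG VH EH Dg \<phi> {(a,b),(x,y)})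
     = (\<Sum>y\<in>N. if {(a,b),(x,y)} \<in> Dg then \<phi> (x,b) + \<phi> (a,y) - \<phi> (a,b) - \<phi> (x,y) else 0)" .
  have e2: "Div VG EG VH EH Dg \<phi> {(a,b),(x,b)} =
    (\<Sum>y\<in>N. if {(a,b),(x,y)} \<in> Dg then \<phi> (x,y) - \<phi> (x,b) else \<phi> (a,y) - \<phi> (a,b))"
    using Div_hor[OF ax bV] N_def by simp
  have "Div VG EG VH EH Dg \<phi> {(a,b),(x,b)} + (\<Sum>y\<in>{y\<in>N. {(a,b),(x,y)} \<in> Dg}. Div VG EG VH EH Dg \<phi> {(a,b),(x,y)})
     = (\<Sum>y\<in>N. (if {(a,b),(x,y)} \<in> Dg then \<phi> (x,y) - \<phi> (x,b) else \<phi> (a,y) - \<phi> (a,b))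
         + (if {(a,b),(x,y)} \<in> Dg then \<phi> (x,b) + \<phi> (a,y) - \<phi> (a,b) - \<phi> (x,y) else 0))"
    unfolding e1 e2 by (rule sum.distrib[symmetric])
  also have "\<dots> = (\<Sum>y\<in>N. \<phi> (a,y) - \<phi> (a,b))"
    by (rule sum.cong) auto
  finally show ?thesis unfolding N_def .
qed

lemma QV_Div:
  assumes aV: "a \<in> VG" and by': "{b,y} \<in> EH"
  shows "Div VG EG VH EH Dg \<phi> {(a,b),(a,y)} + (\<Sum>x\<in>{x\<in>{x. {a,x} \<in> EG}. {(a,b),(x,y)} \<in> Dg}. Div VG EG VH EH Dg \<phi> {(a,b),(x,y)})
     = (\<Sum>x\<in>{x. {a,x} \<in> EG}. \<phi> (x,b) - \<phi> (a,b))"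
proof -
  define N where "N = {x. {a,x} \<in> EG}"
  have finN: "finite N" unfolding N_def using nbr_finite[OF sG] .
  have "(\<Sum>x\<in>{x\<in>N. {(a,b),(x,y)} \<in> Dg}. Div VG EG VH EH Dg \<phi> {(a,b),(x,y)})
     = (\<Sum>x\<in>N. if {(a,b),(x,y)} \<in> Dg then Div VG EG VH EH Dg \<phi> {(a,b),(x,y)} else 0)"
    by (rule sum.inter_filter[OF finN])
  also have "\<dots> = (\<Sum>x\<in>N. if {(a,b),(x,y)} \<in> Dg then \<phi> (x,b) + \<phi> (a,y) - \<phi> (a,b) - \<phi> (x,y) else 0)"
  proof (rule sum.cong[OF refl])
    fix x assume "x \<in> N"
    then have ax: "{a,x} \<in> EG" using N_def by simp
    show "(if {(a,b),(x,y)} \<in> Dg then Div VG EG VH EH Dg \<phi> {(a,b),(x,y)} else 0) =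
          (if {(a,b),(x,y)} \<in> Dg then \<phi> (x,b) + \<phi> (a,y) - \<phi> (a,b) - \<phi> (x,y) else 0)"
      using Div_diag[OF ax by'] by simp
  qed
  finally have e1: "(\<Sum>x\<in>{x\<in>N. {(a,b),(x,y)} \<in> Dg}. Div VG EG VH EH Dg \<phi> {(a,b),(x,y)})
     = (\<Sum>x\<in>N. if {(a,b),(x,y)} \<in> Dg then \<phi> (x,b) + \<phi> (a,y) - \<phi> (a,b) - \<phi> (x,y) else 0)" .
  have e2: "Div VG EG VH EH Dg \<phi> {(a,b),(a,y)} =
    (\<Sum>x\<in>N. if {(a,b),(x,y)} \<in> Dg then \<phi> (x,y) - \<phi> (a,y) else \<phi> (x,b) - \<phi> (a,b))"
    using Div_ver[OF aV by'] N_def by simp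
  have "Div VG EG VH EH Dg \<phi> {(a,b),(a,y)} + (\<Sum>x\<in>{x\<in>N. {(a,b),(x,y)} \<in> Dg}. Div VG EG VH EH Dg \<phi> {(a,b),(x,y)})
     = (\<Sum>x\<in>N. (if {(a,b),(x,y)} \<in> Dg then \<phi> (x,y) - \<phi> (a,y) else \<phi> (x,b) - \<phi> (a,b))
         + (if {(a,b),(x,y)} \<in> Dg then \<phi> (x,b) + \<phi> (a,y) - \<phi> (a,b) - \<phi> (x,y) else 0))"
    unfolding e1 e2 by (rule sum.distrib[symmetric])
  also have "\<dots> = (\<Sum>x\<in>N. \<phi> (x,b) - \<phi> (a,b))"
    by (rule sum.cong) auto
  finally show ?thesis unfolding N_def .
qed

lemma QH_indep:
  assumes cart: "is_cartier VG EG VH EH Dg D" and ax: "{a,x} \<in> EG" and ax': "{a,x'} \<in> EG" and bV: "b \<in> VH"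
  shows "QH EH Dg D a b x = QH EH Dg D a b x'"
proof -
  have aV: "a \<in> VG" using eG[OF ax] by auto
  obtain \<phi> where h\<phi>: "\<forall>r\<in>tri_edges VG EG VH EH Dg. (a,b) \<in> r \<longrightarrow> D r = Div VG EG VH EH Dg \<phi> r"
    using cart aV bV unfolding is_cartier_def tri_vertices_def by blast
  have gen: "QH EH Dg D a b z = (\<Sum>y\<in>{y. {b,y} \<in> EH}. \<phi> (a,y) - \<phi> (a,b))" if az: "{a,z} \<in> EG" for z
  proof -
    have "{(a,b),(z,b)} \<in> tri_edges VG EG VH EH Dg"
      unfolding tri_edges_def hor_edges_def using az bV by blast
    then have d1: "D {(a,b),(z,b)} = Div VG EG VH EH Dg \<phi> {(a,b),(z,b)}" using h\<phi> by simp
    have d2: "(\<Sum>y\<in>{y\<in>{y. {b,y} \<in> EH}. {(a,b),(z,y)} \<in> Dg}. D {(a,b),(z,y)}) =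
        (\<Sum>y\<in>{y\<in>{y. {b,y} \<in> EH}. {(a,b),(z,y)} \<in> Dg}. Div VG EG VH EH Dg \<phi> {(a,b),(z,y)})"
      using h\<phi> Dg_tri_edges by (intro sum.cong) auto
    show ?thesis unfolding QH_def d1 d2 using QH_Div[OF az bV] .
  qed
  show ?thesis using gen[OF ax] gen[OF ax'] by simp
qed

lemma QV_indep:
  assumes cart: "is_cartier VG EG VH EH Dg D" and aV: "a \<in> VG" and by': "{b,y} \<in> EH" and by'': "{b,y'} \<in> EH"
  shows "QV EG Dg D a b y = QV EG Dg D a b y'"
proof -
  have bV: "b \<in> VH" using eH[OF by'] by auto
  obtain \<phi> where h\<phi>: "\<forall>r\<in>tri_edges VG EG VH EH Dg. (a,b) \<in> r \<longrightarrow> D r = Div VG EG VH EH Dg \<phi> r"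
    using cart aV bV unfolding is_cartier_def tri_vertices_def by blast
  have gen: "QV EG Dg D a b z = (\<Sum>x\<in>{x. {a,x} \<in> EG}. \<phi> (x,b) - \<phi> (a,b))" if bz: "{b,z} \<in> EH" for z
  proof -
    have "{(a,b),(a,z)} \<in> tri_edges VG EG VH EH Dg"
      unfolding tri_edges_def ver_edges_def using bz aV by blast
    then have d1: "D {(a,b),(a,z)} = Div VG EG VH EH Dg \<phi> {(a,b),(a,z)}" using h\<phi> by simp
    have d2: "(\<Sum>x\<in>{x\<in>{x. {a,x} \<in> EG}. {(a,b),(x,z)} \<in> Dg}. D {(a,b),(x,z)}) =
        (\<Sum>x\<in>{x\<in>{x. {a,x} \<in> EG}. {(a,b),(x,z)} \<in> Dg}. Div VG EG VH EH Dg \<phi> {(a,b),(x,z)})"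
      using h\<phi> Dg_tri_edges by (intro sum.cong) auto
    show ?thesis unfolding QV_def d1 d2 using QV_Div[OF aV bz] .
  qed
  show ?thesis using gen[OF by'] gen[OF by''] by simp
qed

definition KK :: "(('a \<times> 'b) set \<Rightarrow> int) \<Rightarrow> 'a \<Rightarrow> 'a \<Rightarrow> 'b \<Rightarrow> 'b \<Rightarrow> int" where
  "KK D a x b y = (if {(a,b),(x,y)} \<in> Dg then D {(a,b),(x,y)} else - D {(x,b),(a,y)})"

lemma finish:
  assumes cart: "is_cartier VG EG VH EH Dg D"
    and mix: "\<forall>a x b y. {a,x} \<in> EG \<longrightarrow> {b,y} \<in> EH \<longrightarrow>
            \<phi> (x,y) - \<phi> (x,b) - \<phi> (a,y) + \<phi> (a,b) = KK D a x b y"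
  shows "\<exists>D' \<phi>. is_cartier VG EG VH EH Dg D' \<and> (\<forall>e\<in>Dg. D' e = 0) \<and>
           (\<forall>r. D' r = D r + Div VG EG VH EH Dg \<phi> r)"
proof (intro exI conjI)
  show "\<forall>r. D r + Div VG EG VH EH Dg \<phi> r = D r + Div VG EG VH EH Dg \<phi> r" by simp
  show "\<forall>e\<in>Dg. D e + Div VG EG VH EH Dg \<phi> e = 0"
  proof
    fix e assume eD: "e \<in> Dg"
    then obtain a x b y where h: "e = {(a,b),(x,y)}" "{a,x} \<in> EG" "{b,y} \<in> EH" using Dg_form by blast
    have "KK D a x b y = D e" using eD h unfolding KK_def by simp
    moreover have "Div VG EG VH EH Dg \<phi> e = \<phi> (x,b) + \<phi> (a,y) - \<phi> (a,b) - \<phi> (x,y)"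
      using Div_diag[OF h(2) h(3)] eD h(1) by simp
    ultimately show "D e + Div VG EG VH EH Dg \<phi> e = 0" using mix h by force
  qed
  show "is_cartier VG EG VH EH Dg (\<lambda>r. D r + Div VG EG VH EH Dg \<phi> r)"
    unfolding is_cartier_def
  proof (intro conjI ballI)
    show "is_divisor VG EG VH EH Dg (\<lambda>r. D r + Div VG EG VH EH Dg \<phi> r)"
      using cart unfolding is_cartier_def is_divisor_def Div_def by simp
    fix v assume "v \<in> tri_vertices VG VH"
    then obtain \<psi> where h\<psi>: "\<forall>r\<in>tri_edges VG EG VH EH Dg. v \<in> r \<longrightarrow> D r = Div VG EG VH EH Dg \<psi> r"
      using cart unfolding is_cartier_def by blast
    show "\<exists>\<phi>'. \<forall>r\<in>tri_edges VG EG VH EH Dg. v \<in> r \<longrightarrow>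
        D r + Div VG EG VH EH Dg \<phi> r = Div VG EG VH EH Dg \<phi>' r"
      using h\<psi> Div_add[of VG EG VH EH Dg \<psi> \<phi>] by (intro exI[of _ "\<lambda>u. \<psi> u + \<phi> u"]) simp
  qed
qed

lemma finite_edges: "simple_graph V E \<Longrightarrow> finite E"
proof -
  assume sg: "simple_graph V E"
  have "E \<subseteq> Pow V"
  proof
    fix e assume eE: "e \<in> E"
    then obtain a x where ex: "e = {a,x}" using sg unfolding simple_graph_def by meson
    then have "{a,x} \<in> E" using eE by simp
    from sg_edge[OF sg this] show "e \<in> Pow V" using ex by simp
  qed
  moreover have "finite V" using sg unfolding simple_graph_def by blast
  ultimately show "finite E" using finite_subset by blast
qed

lemma main_H:
  assumes cart: "is_cartier VG EG VH EH Dg D" and nc: "\<not> has_cycle VH EH"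
  shows "\<exists>D' \<phi>. is_cartier VG EG VH EH Dg D' \<and> (\<forall>e\<in>Dg. D' e = 0) \<and>
           (\<forall>r. D' r = D r + Div VG EG VH EH Dg \<phi> r)"
proof -
  define T where "T b a = (if b \<in> VH \<and> (\<exists>x. {a,x} \<in> EG) then - QH EH Dg D a b (SOME x. {a,x} \<in> EG) else 0)" for b a
  have Tval: "T b a = - QH EH Dg D a b x" if ax: "{a,x} \<in> EG" and bV: "b \<in> VH" for a x b
  proof -
    have "{a, SOME x. {a,x} \<in> EG} \<in> EG" using ax by (rule someI)
    then show ?thesis using QH_indep[OF cart ax _ bV] ax bV T_def by (metis (no_types, lifting))
  qed
  have hyp: "\<forall>b a x. {a,x} \<in> EG \<longrightarrow> T b x - T b a = (\<Sum>y\<in>{y. {b,y} \<in> EH}. KK D a x b y)"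
  proof (intro allI impI)
    fix b a x assume ax: "{a,x} \<in> EG"
    have xa: "{x,a} \<in> EG" using ax by (simp add: insert_commute)
    show "T b x - T b a = (\<Sum>y\<in>{y. {b,y} \<in> EH}. KK D a x b y)"
    proof (cases "b \<in> VH")
      case False
      have "{y. {b,y} \<in> EH} = {}"
      proof (rule ccontr)
        assume "{y. {b,y} \<in> EH} \<noteq> {}"
        then obtain y where "{b,y} \<in> EH" by blast
        from eH[OF this] False show False by blast
      qed
      then show ?thesis using False T_def by simp
    next
      case True
      define N where "N = {y. {b,y} \<in> EH}"
      have finN: "finite N" unfolding N_def using nbr_finite[OF sH] .
      have "T b x - T b a = QH EH Dg D a b x - QH EH Dg D x b a"
        using Tval[OF ax True] Tval[OF xa True] by simp
      also have "\<dots> = (\<Sum>y\<in>N. if {(a,b),(x,y)} \<in> Dg then D {(a,b),(x,y)} else 0)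
                     - (\<Sum>y\<in>N. if {(x,b),(a,y)} \<in> Dg then D {(x,b),(a,y)} else 0)"
        unfolding QH_def N_def[symmetric] sum.inter_filter[OF finN] by (simp add: insert_commute)
      also have "\<dots> = (\<Sum>y\<in>N. (if {(a,b),(x,y)} \<in> Dg then D {(a,b),(x,y)} else 0)
                     - (if {(x,b),(a,y)} \<in> Dg then D {(x,b),(a,y)} else 0))"
        by (rule sum_subtractf[symmetric])
      also have "\<dots> = (\<Sum>y\<in>N. KK D a x b y)"
      proof (rule sum.cong[OF refl])
        fix y assume "y \<in> N"
        then have by': "{b,y} \<in> EH" using N_def by simp
        show "(if {(a,b),(x,y)} \<in> Dg then D {(a,b),(x,y)} else 0)
                     - (if {(x,b),(a,y)} \<in> Dg then D {(x,b),(a,y)} else 0) = KK D a x b y"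
          using xor[OF ax by'] unfolding KK_def by auto
      qed
      finally show ?thesis unfolding N_def .
    qed
  qed
  have anti: "\<forall>a x b y. {a,x} \<in> EG \<longrightarrow> {b,y} \<in> EH \<longrightarrow> KK D a x y b = - KK D a x b y"
  proof (intro allI impI)
    fix a x b y assume ax: "{a,x} \<in> EG" and by': "{b,y} \<in> EH"
    show "KK D a x y b = - KK D a x b y"
      using xor[OF ax by'] unfolding KK_def by (auto simp: insert_commute)
  qed
  obtain \<phi> where mix: "\<forall>a x b y. {a,x} \<in> EG \<longrightarrow> {b,y} \<in> EH \<longrightarrow>
            \<phi> (x,y) - \<phi> (x,b) - \<phi> (a,y) + \<phi> (a,b) = KK D a x b y"
    using AL[of EH VH EG "KK D" T, OF finite_edges[OF sH] sH nc anti hyp] by blast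
  show ?thesis using finish[OF cart mix] .
qed

lemma main_G:
  assumes cart: "is_cartier VG EG VH EH Dg D" and nc: "\<not> has_cycle VG EG"
  shows "\<exists>D' \<phi>. is_cartier VG EG VH EH Dg D' \<and> (\<forall>e\<in>Dg. D' e = 0) \<and>
           (\<forall>r. D' r = D r + Div VG EG VH EH Dg \<phi> r)"
proof -
  define T where "T a b = (if a \<in> VG \<and> (\<exists>y. {b,y} \<in> EH) then - QV EG Dg D a b (SOME y. {b,y} \<in> EH) else 0)" for a b
  have Tval: "T a b = - QV EG Dg D a b y" if by': "{b,y} \<in> EH" and aV: "a \<in> VG" for a b y
  proof -
    have "{b, SOME y. {b,y} \<in> EH} \<in> EH" using by' by (rule someI)
    then show ?thesis using QV_indep[OF cart aV by'] by' aV T_def by (metis (no_types, lifting))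
  qed
  have hyp: "\<forall>a b y. {b,y} \<in> EH \<longrightarrow> T a y - T a b = (\<Sum>x\<in>{x. {a,x} \<in> EG}. KK D a x b y)"
  proof (intro allI impI)
    fix a b y assume by': "{b,y} \<in> EH"
    have yb: "{y,b} \<in> EH" using by' by (simp add: insert_commute)
    show "T a y - T a b = (\<Sum>x\<in>{x. {a,x} \<in> EG}. KK D a x b y)"
    proof (cases "a \<in> VG")
      case False
      have "{x. {a,x} \<in> EG} = {}"
      proof (rule ccontr)
        assume "{x. {a,x} \<in> EG} \<noteq> {}"
        then obtain x where "{a,x} \<in> EG" by blast
        from eG[OF this] False show False by blast
      qed
      then show ?thesis using False T_def by simp
    next
      case True
      define N where "N = {x. {a,x} \<in> EG}"
      have finN: "finite N" unfolding N_def using nbr_finite[OF sG] .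
      have "T a y - T a b = QV EG Dg D a b y - QV EG Dg D a y b"
        using Tval[OF by' True] Tval[OF yb True] by simp
      also have "\<dots> = (\<Sum>x\<in>N. if {(a,b),(x,y)} \<in> Dg then D {(a,b),(x,y)} else 0)
                     - (\<Sum>x\<in>N. if {(x,b),(a,y)} \<in> Dg then D {(x,b),(a,y)} else 0)"
      proof -
        have sw: "\<And>x. {(a,y),(x,b)} = {(x,b),(a,y)}" "{(a,y),(a,b)} = {(a,b),(a,y)}" by blast+
        show ?thesis unfolding QV_def N_def[symmetric] sum.inter_filter[OF finN] sw by simp
      qed
      also have "\<dots> = (\<Sum>x\<in>N. (if {(a,b),(x,y)} \<in> Dg then D {(a,b),(x,y)} else 0)
                     - (if {(x,b),(a,y)} \<in> Dg then D {(x,b),(a,y)} else 0))"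
        by (rule sum_subtractf[symmetric])
      also have "\<dots> = (\<Sum>x\<in>N. KK D a x b y)"
      proof (rule sum.cong[OF refl])
        fix x assume "x \<in> N"
        then have ax: "{a,x} \<in> EG" using N_def by simp
        show "(if {(a,b),(x,y)} \<in> Dg then D {(a,b),(x,y)} else 0)
                     - (if {(x,b),(a,y)} \<in> Dg then D {(x,b),(a,y)} else 0) = KK D a x b y"
          using xor[OF ax by'] unfolding KK_def by auto
      qed
      finally show ?thesis unfolding N_def .
    qed
  qed
  have anti: "\<forall>b y a x. {b,y} \<in> EH \<longrightarrow> {a,x} \<in> EG \<longrightarrow> KK D x a b y = - KK D a x b y"
  proof (intro allI impI)
    fix a x b y assume by': "{b,y} \<in> EH" and ax: "{a,x} \<in> EG"
    show "KK D x a b y = - KK D a x b y"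
      using xor[OF ax by'] unfolding KK_def by (auto simp: insert_commute)
  qed
  obtain \<psi> where mix0: "\<forall>b y a x. {b,y} \<in> EH \<longrightarrow> {a,x} \<in> EG \<longrightarrow>
            \<psi> (y,x) - \<psi> (y,a) - \<psi> (b,x) + \<psi> (b,a) = KK D a x b y"
    using AL[of EG VG EH "\<lambda>b y a x. KK D a x b y" T, OF finite_edges[OF sG] sG nc anti hyp] by blast
  define \<phi> where "\<phi> v = \<psi> (snd v, fst v)" for v
  have mix: "\<forall>a x b y. {a,x} \<in> EG \<longrightarrow> {b,y} \<in> EH \<longrightarrow>
            \<phi> (x,y) - \<phi> (x,b) - \<phi> (a,y) + \<phi> (a,b) = KK D a x b y"
    using mix0 unfolding \<phi>_def by force
  show ?thesis using finish[OF cart mix] .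
qed

end

theorem mainTheorem8:
  fixes VG :: "'a set" and EG :: "'a set set" and VH :: "'b set" and EH :: "'b set set"
    and Dg :: "('a \<times> 'b) set set" and D :: "('a \<times> 'b) set \<Rightarrow> int"
  assumes "simple_graph VG EG" and "simple_graph VH EH"
    and "(connected_graph VG EG \<and> tree_graph VH EH) \<or> (tree_graph VG EG \<and> connected_graph VH EH)"
    and "is_triangulation EG EH Dg"
    and "is_cartier VG EG VH EH Dg D"
  shows "\<exists>D' \<phi>. is_cartier VG EG VH EH Dg D' \<and> (\<forall>e\<in>Dg. D' e = 0) \<and>
           (\<forall>r. D' r = D r + Div VG EG VH EH Dg \<phi> r)"
proof -
  from assms(3) have "\<not> has_cycle VH EH \<or> \<not> has_cycle VG EG" unfolding tree_graph_def by blast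
  then show ?thesis
  proof
    assume "\<not> has_cycle VH EH"
    then show ?thesis using main_H[OF assms(1) assms(2) assms(4) assms(5)] by blast
  next
    assume "\<not> has_cycle VG EG"
    then show ?thesis using main_G[OF assms(1) assms(2) assms(4) assms(5)] by blast
  qed
qed

end
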